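(* Let $M$ be a canonical dtpla and $N$ an earliest total dtop (all of whose states are reachable) such that $[\![M]\!]=[\![N]\!]$. Let $\varphi$ be the aheadness mapping from $N$ to $M$, and let $C\in\mathcal C_\Sigma$. Then (1) $N(C)\Phi=\mathrm{pref}(M,C)$, and (2) for every $v\in\mathbb N_+^*$, $q\in Q_N$ and $p\in P_M$: if $N(C)/v=\langle q,\bot\rangle$ then $\varphi(q,p)=M(C[p])/v$.
   Context: Trees and patterns. $T_\Delta(Z)$ is the set of trees over ranked alphabet $\Delta$ with extra nullary symbols $Z$; $t/v$ is the subtree at node $v\in\mathbb N_+^*$; $\bot$ is a special nullary symbol. For trees $t,t'$, $t\sqsubseteq t'$ means $t'$ is obtained from $t$ by replacing some occurrences of $\bot$ by trees; for a finite nonempty set $T$ of trees, $\sqcap T$ is the greatest lower bound w.r.t. $\sqsubseteq$ (largest common prefix, with $\bot$ at the highest nodes where the trees disagree). A $\Sigma$-context is $C\in T_\Sigma(\{\bot\})$ with exactly one occurrence of $\bot$; $\mathcal C_\Sigma$ is their set; $C[t]$ replaces $\bot$ by $t$. Dtlas. A dtla $M$ from $\Sigma$ to $\Delta$ consists of a finite set $Q_M$ of states, a total deterministic bottom-up tree automaton with finite state set $P_M$ and transitions $\delta(a,p_1,\dots,p_k)$, extended to $\delta_M:T_\Sigma\to P_M$ ($[\![p]\!]_M=\delta_M^{-1}(p)$), axioms $A_M(p)\in T_\Delta(Q_M(\{x_0\}))$, and at most one rule $q(a(x_1\langle p_1\rangle,\dots,x_k\langle p_k\rangle))\to\mathrm{rhs}_M(q,a,p_1,\dots,p_k)\in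 T_\Delta(Q_M(X_k))$ per $q,a,p_1,\dots,p_k$. Semantics: $q_M(a(s_1,\dots,s_k))=\mathrm{rhs}_M(q,a,\delta_M(s_1),\dots,\delta_M(s_k))[q'(x_i)\leftarrow q'_M(s_i)]$, $M(s)=A_M(\delta_M(s))[q(x_0)\leftarrow q_M(s)]$. Total: $[\![M]\!]$ total. A dtop is a dtla with a single look-ahead state $\bot$; write $q_N(s)$, $A_N$, $\mathrm{rhs}_N(q,a)$. A dtpla is a dtla with $|P_M|\ge2$. For $C\in\mathcal C_\Sigma$, $p\in P_M$, $M(C[p])\in T_\Delta(Q_M\times P_M)$ is the output on $C$ with the hole treated as a leaf of look-ahead state $p$ and $q_M(p)=\langle q,p\rangle$; for a dtop $N$, $N(C)=N(C[\bot])\in T_\Delta(Q_N\times\{\bot\})$. A state $q$ is reachable if $\langle q,p\rangle$ labels a node of $M(C[p])$ for some $C,p$. $M$ is la-uniform if there is $\rho_M:Q_M\to P_M$ such that the domain of $[\![q]\!]_M$ is $[\![\rho_M(q)]\!]_M$, every $q(x_0)$ in $A_M(p)$ has $\rho_M(q)=p$, every $q'(x_i)$ in $\mathrm{rhs}_M(q,a,p_1,\dots,p_k)$ has $\rho_M(q')=p_i$, and the rule for $q,a,p_1,\dots,p_k$ exists iff $\delta(a,p_1,\dots,p_k)=\rho_M(q)$. A dtla is earliest if there is no state $q$ and $d\in\Delta$ such that $q(s)$ has root label $d$ for all $s$ in the domain of $[\![q]\!]$. $M$ is canonical if it is total, la-uniform, earliest, all states reachable, and distinct states have distinct translations. $\mathrm{pref}(M,C)=\sqcap\{M(C[p])\mid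 p\in P_M\}$. For $t\in T_\Delta(Q_N\times\{\bot\})$, $t\Phi$ is $t$ with every $\langle q,\bot\rangle$ replaced by $\bot$. Aheadness mapping: the unique $\varphi:Q_N\times P_M\to T_\Delta(Q_M\times P_M)$ with $M(C[p])=N(C)[\langle q,\bot\rangle\leftarrow\varphi(q,p)\mid q\in Q_N]$ for all $C\in\mathcal C_\Sigma$, $p\in P_M$. *)

theory Defs
  imports Main
begin

text \<open>For a ranked alphabet,
  well-formedness (wf_tr) checks labels and arities; leaves Var v are the extra
  nullary symbols (states, look-ahead holes, or the special symbol bottom).\<close>

datatype (labs: 'a, vars: 'v) tr = Sym 'a "('a,'v) tr list" | Var 'v
  for map: tmap

fun wf_tr :: "'a set \<Rightarrow> ('a \<Rightarrow> nat) \<Rightarrow> ('a,'v) tr \<Rightarrow> bool" where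
  "wf_tr A rk (Var v) = True"
| "wf_tr A rk (Sym a ts) = (a \<in> A \<and> length ts = rk a \<and> (\<forall>t\<in>set ts. wf_tr A rk t))"

definition ground :: "'a set \<Rightarrow> ('a \<Rightarrow> nat) \<Rightarrow> ('a,'v) tr \<Rightarrow> bool" where
  "ground A rk t \<longleftrightarrow> wf_tr A rk t \<and> vars t = {}"

fun nvars :: "('a,'v) tr \<Rightarrow> nat" where
  "nvars (Var v) = 1"
| "nvars (Sym a ts) = sum_list (map nvars ts)"

text \<open>Sigma-contexts: trees in T_Sigma({bot}) (bot = the unit leaf) with exactly one bot.\<close>
definition is_context :: "'a set \<Rightarrow> ('a \<Rightarrow> nat) \<Rightarrow> ('a,unit) tr \<Rightarrow> bool" where
  "is_context A rk C \<longleftrightarrow> wf_tr A rk C \<and> nvars C = 1"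

fun tsubst :: "('a,'v) tr \<Rightarrow> ('v \<Rightarrow> ('a,'w) tr) \<Rightarrow> ('a,'w) tr" where
  "tsubst (Var v) f = f v"
| "tsubst (Sym a ts) f = Sym a (map (\<lambda>t. tsubst t f) ts)"

fun osubst :: "('a,'v) tr \<Rightarrow> ('v \<Rightarrow> ('a,'w) tr option) \<Rightarrow> ('a,'w) tr option" where
  "osubst (Var v) f = f v"
| "osubst (Sym a ts) f =
     (let rs = map (\<lambda>t. osubst t f) ts in
      if None \<in> set rs then None else Some (Sym a (map the rs)))"

text \<open>Subtree t/v at node v, a list of positive integers (1-based child indices);
  None if v is not a node of t.\<close>
fun subt :: "('a,'v) tr \<Rightarrow> nat list \<Rightarrow> ('a,'v) tr option" where
  "subt t [] = Some t"
| "subt (Var x) (i # v) = None"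
| "subt (Sym a ts) (i # v) = (if 1 \<le> i \<and> i \<le> length ts then subt (ts ! (i - 1)) v else None)"

section \<open>Patterns: leaves 'z option, where None is the special symbol bot\<close>

inductive pat_le :: "('a,'z option) tr \<Rightarrow> ('a,'z option) tr \<Rightarrow> bool" where
  bot: "pat_le (Var None) t"
| var: "pat_le (Var (Some z)) (Var (Some z))"
| sym: "list_all2 pat_le ts us \<Longrightarrow> pat_le (Sym a ts) (Sym a us)"

definition is_glb :: "('a,'z option) tr set \<Rightarrow> ('a,'z option) tr \<Rightarrow> bool" where
  "is_glb T t \<longleftrightarrow> (\<forall>u\<in>T. pat_le t u) \<and> (\<forall>t'. (\<forall>u\<in>T. pat_le t' u) \<longrightarrow> pat_le t' t)"

definition Glb :: "('a,'z option) tr set \<Rightarrow> ('a,'z option) tr" where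
  "Glb T = (THE t. is_glb T t)"

definition Phi :: "('a,'v) tr \<Rightarrow> ('a,'z option) tr" where
  "Phi t = tmap id (\<lambda>_. None) t"

definition erase :: "('a,'v) tr \<Rightarrow> ('a,unit) tr" where
  "erase t = tmap id (\<lambda>_. ()) t"

text \<open>st = Q_M, la = P_M, dlt = delta, axm p = A_M(p) (leaf q stands for q(x0)),
  rul q a [p1..pk] = rhs_M(q,a,p1..pk) if the rule exists (leaf (q',i) stands for q'(x_i)).\<close>
record ('s,'d,'q,'p) dtla =
  st  :: "'q set"
  la  :: "'p set"
  dlt :: "'s \<Rightarrow> 'p list \<Rightarrow> 'p"
  axm :: "'p \<Rightarrow> ('d,'q) tr"
  rul :: "'q \<Rightarrow> 's \<Rightarrow> 'p list \<Rightarrow> ('d,'q \<times> nat) tr option"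

definition is_dtla ::
  "'s set \<Rightarrow> ('s \<Rightarrow> nat) \<Rightarrow> 'd set \<Rightarrow> ('d \<Rightarrow> nat) \<Rightarrow> ('s,'d,'q,'p) dtla \<Rightarrow> bool" where
  "is_dtla Sig rkS Del rkD M \<longleftrightarrow>
     finite Sig \<and> finite Del \<and> finite (st M) \<and> finite (la M) \<and>
     (\<forall>a\<in>Sig. \<forall>ps. length ps = rkS a \<and> set ps \<subseteq> la M \<longrightarrow> dlt M a ps \<in> la M) \<and>
     (\<forall>p\<in>la M. wf_tr Del rkD (axm M p) \<and> vars (axm M p) \<subseteq> st M) \<and>
     (\<forall>q\<in>st M. \<forall>a\<in>Sig. \<forall>ps r. length ps = rkS a \<and> set ps \<subseteq> la M \<and> rul M q a ps = Some r \<longrightarrow>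
         wf_tr Del rkD r \<and> vars r \<subseteq> st M \<times> {1..rkS a})"

text \<open>Look-ahead automaton run; a leaf Var p is a leaf of look-ahead state p.\<close>
fun dstate :: "('s,'d,'q,'p) dtla \<Rightarrow> ('s,'p) tr \<Rightarrow> 'p" where
  "dstate M (Var p) = p"
| "dstate M (Sym a ts) = dlt M a (map (dstate M) ts)"

fun qsem :: "('s,'d,'q,'p) dtla \<Rightarrow> 'q \<Rightarrow> ('s,'p) tr \<Rightarrow> ('d,'q \<times> 'p) tr option" where
  "qsem M q (Var p) = Some (Var (q, p))"
| "qsem M q (Sym a ts) =
     (let R = map (\<lambda>t q'. qsem M q' t) ts in
      case rul M q a (map (dstate M) ts) of
        None \<Rightarrow> None
      | Some r \<Rightarrow> osubst r (\<lambda>(q', i). if 1 \<le> i \<and> i \<le> length ts then (R ! (i - 1)) q' else None))"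

definition msem :: "('s,'d,'q,'p) dtla \<Rightarrow> ('s,'p) tr \<Rightarrow> ('d,'q \<times> 'p) tr option" where
  "msem M s = osubst (axm M (dstate M s)) (\<lambda>q. qsem M q s)"

definition ctx_out :: "('s,'d,'q,'p) dtla \<Rightarrow> ('s,unit) tr \<Rightarrow> 'p \<Rightarrow> ('d,'q \<times> 'p) tr option" where
  "ctx_out M C p = msem M (tsubst C (\<lambda>_. Var p))"

definition same_transl ::
  "'s set \<Rightarrow> ('s \<Rightarrow> nat) \<Rightarrow> ('s,'d,'q,'p) dtla \<Rightarrow> ('s,'d,'r,'u) dtla \<Rightarrow> bool" where
  "same_transl Sig rkS M N \<longleftrightarrow>
     (\<forall>s1 s2. ground Sig rkS s1 \<and> ground Sig rkS s2 \<and> erase s1 = erase s2 \<longrightarrow>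
        map_option erase (msem M s1) = map_option erase (msem N s2))"

definition total :: "'s set \<Rightarrow> ('s \<Rightarrow> nat) \<Rightarrow> ('s,'d,'q,'p) dtla \<Rightarrow> bool" where
  "total Sig rkS M \<longleftrightarrow> (\<forall>s. ground Sig rkS s \<longrightarrow> msem M s \<noteq> None)"

definition qdom :: "'s set \<Rightarrow> ('s \<Rightarrow> nat) \<Rightarrow> ('s,'d,'q,'p) dtla \<Rightarrow> 'q \<Rightarrow> ('s,'p) tr set" where
  "qdom Sig rkS M q = {s. ground Sig rkS s \<and> qsem M q s \<noteq> None}"

definition lasem :: "'s set \<Rightarrow> ('s \<Rightarrow> nat) \<Rightarrow> ('s,'d,'q,'p) dtla \<Rightarrow> 'p \<Rightarrow> ('s,'p) tr set" where
  "lasem Sig rkS M p = {s. ground Sig rkS s \<and> dstate M s = p}"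

definition la_uniform :: "'s set \<Rightarrow> ('s \<Rightarrow> nat) \<Rightarrow> ('s,'d,'q,'p) dtla \<Rightarrow> bool" where
  "la_uniform Sig rkS M \<longleftrightarrow> (\<exists>rho.
     (\<forall>q\<in>st M. rho q \<in> la M \<and> qdom Sig rkS M q = lasem Sig rkS M (rho q)) \<and>
     (\<forall>p\<in>la M. \<forall>q\<in>vars (axm M p). rho q = p) \<and>
     (\<forall>q\<in>st M. \<forall>a\<in>Sig. \<forall>ps r. length ps = rkS a \<and> set ps \<subseteq> la M \<and> rul M q a ps = Some r \<longrightarrow>
         (\<forall>(q', i)\<in>vars r. rho q' = ps ! (i - 1))) \<and>
     (\<forall>q\<in>st M. \<forall>a\<in>Sig. \<forall>ps. length ps = rkS a \<and> set ps \<subseteq> la M \<longrightarrow>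
         (rul M q a ps \<noteq> None \<longleftrightarrow> dlt M a ps = rho q)))"

definition earliest :: "'s set \<Rightarrow> ('s \<Rightarrow> nat) \<Rightarrow> 'd set \<Rightarrow> ('s,'d,'q,'p) dtla \<Rightarrow> bool" where
  "earliest Sig rkS Del M \<longleftrightarrow>
     \<not> (\<exists>q\<in>st M. \<exists>d\<in>Del. \<forall>s\<in>qdom Sig rkS M q. \<exists>ts. qsem M q s = Some (Sym d ts))"

definition reachable :: "'s set \<Rightarrow> ('s \<Rightarrow> nat) \<Rightarrow> ('s,'d,'q,'p) dtla \<Rightarrow> 'q \<Rightarrow> bool" where
  "reachable Sig rkS M q \<longleftrightarrow>
     (\<exists>C p t. is_context Sig rkS C \<and> p \<in> la M \<and> ctx_out M C p = Some t \<and> (q, p) \<in> vars t)"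

definition distinct_transl :: "'s set \<Rightarrow> ('s \<Rightarrow> nat) \<Rightarrow> ('s,'d,'q,'p) dtla \<Rightarrow> bool" where
  "distinct_transl Sig rkS M \<longleftrightarrow>
     (\<forall>q1\<in>st M. \<forall>q2\<in>st M. q1 \<noteq> q2 \<longrightarrow> (\<exists>s. ground Sig rkS s \<and> qsem M q1 s \<noteq> qsem M q2 s))"

definition canonical ::
  "'s set \<Rightarrow> ('s \<Rightarrow> nat) \<Rightarrow> 'd set \<Rightarrow> ('d \<Rightarrow> nat) \<Rightarrow> ('s,'d,'q,'p) dtla \<Rightarrow> bool" where
  "canonical Sig rkS Del rkD M \<longleftrightarrow>
     is_dtla Sig rkS Del rkD M \<and> total Sig rkS M \<and> la_uniform Sig rkS M \<and>
     earliest Sig rkS Del M \<and> (\<forall>q\<in>st M. reachable Sig rkS M q) \<and> distinct_transl Sig rkS M"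

definition is_dtpla ::
  "'s set \<Rightarrow> ('s \<Rightarrow> nat) \<Rightarrow> 'd set \<Rightarrow> ('d \<Rightarrow> nat) \<Rightarrow> ('s,'d,'q,'p) dtla \<Rightarrow> bool" where
  "is_dtpla Sig rkS Del rkD M \<longleftrightarrow> is_dtla Sig rkS Del rkD M \<and> card (la M) \<ge> 2"

text \<open>A dtop: a dtla whose only look-ahead state is bot, represented by ().\<close>
definition is_dtop ::
  "'s set \<Rightarrow> ('s \<Rightarrow> nat) \<Rightarrow> 'd set \<Rightarrow> ('d \<Rightarrow> nat) \<Rightarrow> ('s,'d,'q,unit) dtla \<Rightarrow> bool" where
  "is_dtop Sig rkS Del rkD N \<longleftrightarrow> is_dtla Sig rkS Del rkD N \<and> la N = {()}"

definition pref :: "('s,'d,'q,'p) dtla \<Rightarrow> ('s,unit) tr \<Rightarrow> ('d,('q \<times> 'p) option) tr option" where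
  "pref M C = (if \<forall>p\<in>la M. ctx_out M C p \<noteq> None
     then Some (Glb {tmap id Some (the (ctx_out M C p)) | p. p \<in> la M}) else None)"

definition aheadness ::
  "'s set \<Rightarrow> ('s \<Rightarrow> nat) \<Rightarrow> ('s,'d,'q,'p) dtla \<Rightarrow> ('s,'d,'r,unit) dtla
     \<Rightarrow> ('r \<Rightarrow> 'p \<Rightarrow> ('d,'q \<times> 'p) tr) \<Rightarrow> bool" where
  "aheadness Sig rkS M N phi \<longleftrightarrow>
     (\<forall>C p. is_context Sig rkS C \<and> p \<in> la M \<longrightarrow>
        ctx_out M C p = map_option (\<lambda>t. tsubst t (\<lambda>(q, _). phi q p)) (ctx_out N C ()))"

end

theory Submission
  imports Defs
begin


lemma vars_tsubst: "vars (tsubst t F) = (\<Union>x\<in>vars t. vars (F x))"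
  by (induction t) auto

lemma labs_tsubst: "labs (tsubst t F) = labs t \<union> (\<Union>x\<in>vars t. labs (F x))"
  by (induction t) auto

lemma tsubst_tsubst: "tsubst (tsubst t F) G = tsubst t (\<lambda>x. tsubst (F x) G)"
  by (induction t) auto

lemma tsubst_cong: "(\<And>x. x \<in> vars t \<Longrightarrow> F x = G x) \<Longrightarrow> tsubst t F = tsubst t G"
  by (induction t) auto

lemma osubst_eq: "osubst t f = (if \<forall>x\<in>vars t. f x \<noteq> None then Some (tsubst t (\<lambda>x. the (f x))) else None)"
proof (induction t)
  case (Sym a ts)
  show ?case
  proof (cases "\<forall>x\<in>vars (Sym a ts). f x \<noteq> None")
    case True
    then have "\<forall>t\<in>set ts. osubst t f = Some (tsubst t (\<lambda>x. the (f x)))" using Sym by auto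
    then show ?thesis using True by (simp add: Let_def image_iff comp_def cong: map_cong)
  next
    case False
    then obtain t x where "t \<in> set ts" "x \<in> vars t" "f x = None" by auto
    then have "osubst t f = None" using Sym by auto
    then have "None \<in> set (map (\<lambda>t. osubst t f) ts)" using \<open>t \<in> set ts\<close> by force
    then show ?thesis using False by (simp add: Let_def)
  qed
qed simp

lemma osubst_cong: "(\<And>x. x \<in> vars t \<Longrightarrow> F x = G x) \<Longrightarrow> osubst t F = osubst t G"
  by (simp add: osubst_eq cong: tsubst_cong)

lemma osubst_tsubst: "osubst (tsubst r F) g = osubst r (\<lambda>x. osubst (F x) g)"
proof (cases "\<forall>x\<in>vars r. \<forall>y\<in>vars (F x). g y \<noteq> None")
  case True
  have "osubst r (\<lambda>x. osubst (F x) g) = osubst r (\<lambda>x. Some (tsubst (F x) (\<lambda>y. the (g y))))"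
    by (rule osubst_cong) (use True in \<open>simp add: osubst_eq\<close>)
  also have "\<dots> = Some (tsubst r (\<lambda>x. tsubst (F x) (\<lambda>y. the (g y))))" by (simp add: osubst_eq)
  finally show ?thesis using True by (simp add: osubst_eq[of "tsubst r F"] vars_tsubst tsubst_tsubst)
next
  case False
  then obtain x where x: "x \<in> vars r" "\<not> (\<forall>y\<in>vars (F x). g y \<noteq> None)" by blast
  then have "osubst (F x) g = None" by (simp add: osubst_eq)
  then have "osubst r (\<lambda>x. osubst (F x) g) = None" using x(1) by (auto simp: osubst_eq[of r])
  then show ?thesis using False by (auto simp: osubst_eq[of "tsubst r F"] vars_tsubst)
qed

lemma osubst_bind: "Option.bind (osubst r f) (\<lambda>u. osubst u g) = osubst r (\<lambda>x. Option.bind (f x) (\<lambda>u. osubst u g))"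
proof (cases "\<forall>x\<in>vars r. f x \<noteq> None")
  case True
  have e: "\<And>x. x \<in> vars r \<Longrightarrow> Option.bind (f x) (\<lambda>u. osubst u g) = osubst (the (f x)) g"
    using True by (metis bind.simps(2) option.exhaust_sel)
  have "osubst r (\<lambda>x. Option.bind (f x) (\<lambda>u. osubst u g)) = osubst r (\<lambda>x. osubst (the (f x)) g)"
    using e by (rule osubst_cong)
  then show ?thesis using True by (simp add: osubst_eq[of r f] osubst_tsubst)
next
  case False
  then obtain x where x: "x \<in> vars r" "f x = None" by blast
  then have "osubst r (\<lambda>x. Option.bind (f x) (\<lambda>u. osubst u g)) = None"
    unfolding osubst_eq[of r] by (metis bind.simps(1))
  moreover have "osubst r f = None" using x by (auto simp: osubst_eq[of r])
  ultimately show ?thesis by simp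
qed

lemma wf_labs: "wf_tr A rk t \<Longrightarrow> labs t \<subseteq> A"
  by (induction t) auto

lemma wf_tsubst: "wf_tr A rk C \<Longrightarrow> (\<And>x. x\<in>vars C \<Longrightarrow> wf_tr A rk (f x)) \<Longrightarrow> wf_tr A rk (tsubst C f)"
  by (induction C) auto

lemma subt_tsubst: "subt t v = Some (Var x) \<Longrightarrow> subt (tsubst t F) v = Some (F x)"
proof (induction v arbitrary: t)
  case Nil then show ?case by simp
next
  case (Cons i v) then show ?case by (cases t) (auto split: if_splits)
qed

lemma tmap_tsubst_leaf: "tmap id g (tsubst t F1) = tmap id g2 (tsubst t F2) \<Longrightarrow> x \<in> vars t
   \<Longrightarrow> tmap id g (F1 x) = tmap id g2 (F2 x)"
proof (induction t)
  case (Sym a ts)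
  then obtain t where "t \<in> set ts" "x \<in> vars t" by auto
  moreover have "map (\<lambda>t. tmap id g (tsubst t F1)) ts = map (\<lambda>t. tmap id g2 (tsubst t F2)) ts"
    using Sym.prems(1) by (simp add: comp_def id_def)
  ultimately show ?case using Sym.IH by (metis (mono_tags, lifting) map_eq_conv)
qed simp

lemma erase_tsubst: "tmap id g (tsubst C f) = tsubst C (\<lambda>x. tmap id g (f x))"
  by (induction C) auto

lemma dstate_comp: "dstate M (tsubst C f) = dstate M (tsubst C (\<lambda>x. Var (dstate M (f x))))"
  by (induction C) (auto cong: map_cong)



lemma osubst_cong2: "(\<And>a b. (a,b) \<in> vars t \<Longrightarrow> F (a,b) = G (a,b)) \<Longrightarrow> osubst t F = osubst t G"
  by (rule osubst_cong) auto

lemma qsem_comp: "qsem M q (tsubst C (\<lambda>_. s)) =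
  Option.bind (qsem M q (tsubst C (\<lambda>_. Var (dstate M s)))) (\<lambda>u. osubst u (\<lambda>(q',_). qsem M q' s))"
proof (induction C arbitrary: q)
  case (Var x) then show ?case by simp
next
  case (Sym a ts)
  let ?p = "dstate M s"
  let ?H = "\<lambda>u. osubst u (\<lambda>(q',_). qsem M q' s)"
  have ds: "map (dstate M) (map (\<lambda>t. tsubst t (\<lambda>_. s)) ts) = map (dstate M) (map (\<lambda>t. tsubst t (\<lambda>_. Var ?p)) ts)"
    by (simp only: map_map comp_def, intro map_cong refl, rule dstate_comp)
  show ?case
  proof (cases "rul M q a (map (dstate M) (map (\<lambda>t. tsubst t (\<lambda>_. Var ?p)) ts))")
    case None
    then show ?thesis by (simp only: tsubst.simps qsem.simps Let_def ds option.case bind.simps)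
  next
    case (Some r)
    have "qsem M q (tsubst (Sym a ts) (\<lambda>_. s)) = osubst r (\<lambda>(q', i). if 1 \<le> i \<and> i \<le> length ts then qsem M q' (tsubst (ts ! (i - 1)) (\<lambda>_. s)) else None)"
      by (simp only: tsubst.simps qsem.simps Let_def ds Some option.case, intro osubst_cong2) (auto simp: nth_map)
    also have "\<dots> = osubst r (\<lambda>x. Option.bind ((\<lambda>(q', i). if 1 \<le> i \<and> i \<le> length ts then qsem M q' (tsubst (ts ! (i - 1)) (\<lambda>_. Var ?p)) else None) x) ?H)"
    proof (rule osubst_cong)
      fix x assume "x \<in> vars r"
      obtain q' i where x: "x = (q', i)" by (cases x)
      show "(case x of (q', i) \<Rightarrow> if 1 \<le> i \<and> i \<le> length ts then qsem M q' (tsubst (ts ! (i - 1)) (\<lambda>_. s)) else None) =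
          Option.bind ((\<lambda>(q', i). if 1 \<le> i \<and> i \<le> length ts then qsem M q' (tsubst (ts ! (i - 1)) (\<lambda>_. Var ?p)) else None) x) ?H"
      proof (cases "1 \<le> i \<and> i \<le> length ts")
        case True
        then have "ts ! (i - 1) \<in> set ts" by auto
        then show ?thesis using Sym.IH True x by simp
      next
        case False then show ?thesis by (auto simp: x)
      qed
    qed
    also have "\<dots> = Option.bind (osubst r (\<lambda>(q', i). if 1 \<le> i \<and> i \<le> length ts then qsem M q' (tsubst (ts ! (i - 1)) (\<lambda>_. Var ?p)) else None)) ?H"
      by (rule osubst_bind[symmetric])
    also have "osubst r (\<lambda>(q', i). if 1 \<le> i \<and> i \<le> length ts then qsem M q' (tsubst (ts ! (i - 1)) (\<lambda>_. Var ?p)) else None)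
       = qsem M q (tsubst (Sym a ts) (\<lambda>_. Var ?p))"
      using Some by (simp add: Let_def, intro osubst_cong2) (auto simp: nth_map)
    finally show ?thesis .
  qed
qed

lemma msem_comp: "msem M (tsubst C (\<lambda>_. s)) =
  Option.bind (msem M (tsubst C (\<lambda>_. Var (dstate M s)))) (\<lambda>u. osubst u (\<lambda>(q',_). qsem M q' s))"
proof -
  have d: "dstate M (tsubst C (\<lambda>_. s)) = dstate M (tsubst C (\<lambda>_. Var (dstate M s)))"
    by (rule dstate_comp)
  show ?thesis unfolding msem_def d osubst_bind by (rule osubst_cong, rule qsem_comp)
qed


lemma dstate_in: "is_dtla Sig rkS Del rkD M \<Longrightarrow> wf_tr Sig rkS s \<Longrightarrow> vars s \<subseteq> la M \<Longrightarrow> dstate M s \<in> la M"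
proof (induction s)
  case (Sym a ts)
  have "set (map (dstate M) ts) \<subseteq> la M" using Sym by auto
  moreover have "a \<in> Sig" "length ts = rkS a" using Sym.prems by auto
  ultimately show ?case using Sym.prems(1) unfolding is_dtla_def by auto
qed simp

lemma qsem_good: "is_dtla Sig rkS Del rkD M \<Longrightarrow> wf_tr Sig rkS s \<Longrightarrow> vars s \<subseteq> la M \<Longrightarrow> q \<in> st M
  \<Longrightarrow> qsem M q s = Some u \<Longrightarrow> labs u \<subseteq> Del \<and> vars u \<subseteq> st M \<times> vars s"
proof (induction s arbitrary: q u)
  case (Var x) then show ?case by auto
next
  case (Sym a ts)
  let ?ps = "map (dstate M) ts"
  have ps: "set ?ps \<subseteq> la M"
  proof
    fix p assume "p \<in> set ?ps"
    then obtain t where t: "t \<in> set ts" "p = dstate M t" by auto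
    then show "p \<in> la M" using dstate_in[OF Sym.prems(1), of t] Sym.prems(2,3) by auto
  qed
  obtain r where r: "rul M q a ?ps = Some r" using Sym.prems(5) by (auto simp: Let_def split: option.splits)
  have a: "a \<in> Sig" "length ts = rkS a" using Sym.prems(2) by auto
  have rw: "wf_tr Del rkD r" "vars r \<subseteq> st M \<times> {1..rkS a}"
    using Sym.prems(1,4) a ps r unfolding is_dtla_def by (metis length_map)+
  define F where "F = (\<lambda>(q', i). if 1 \<le> i \<and> i \<le> length ts then qsem M q' (ts ! (i - 1)) else None)"
  have "qsem M q (Sym a ts) = osubst r F"
    using r by (simp add: Let_def F_def, intro osubst_cong2) (auto simp: nth_map)
  then have u: "osubst r F = Some u" using Sym.prems(5) by simp
  then have def: "\<forall>x\<in>vars r. F x \<noteq> None" and uu: "u = tsubst r (\<lambda>x. the (F x))"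
    by (auto simp: osubst_eq split: if_splits)
  have ch: "labs (the (F x)) \<subseteq> Del \<and> vars (the (F x)) \<subseteq> st M \<times> vars (Sym a ts)" if x: "x \<in> vars r" for x
  proof -
    obtain q' i where xe: "x = (q', i)" by (cases x)
    have i: "1 \<le> i" "i \<le> length ts" "q' \<in> st M" using rw(2) x xe a by auto
    then have mem: "ts ! (i - 1) \<in> set ts" by auto
    obtain w where w: "qsem M q' (ts ! (i - 1)) = Some w" using def x xe i by (auto simp: F_def)
    have "labs w \<subseteq> Del \<and> vars w \<subseteq> st M \<times> vars (ts ! (i - 1))"
      using Sym.IH[OF mem Sym.prems(1) _ _ i(3) w] Sym.prems(2,3) mem by auto
    moreover have "the (F x) = w" using w xe i by (simp add: F_def)
    ultimately show ?thesis using mem by auto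
  qed
  show ?case unfolding uu labs_tsubst vars_tsubst using ch wf_labs[OF rw(1)] by blast
qed

lemma msem_good: "is_dtla Sig rkS Del rkD M \<Longrightarrow> wf_tr Sig rkS s \<Longrightarrow> vars s \<subseteq> la M
  \<Longrightarrow> msem M s = Some u \<Longrightarrow> labs u \<subseteq> Del \<and> vars u \<subseteq> st M \<times> vars s"
proof -
  assume D: "is_dtla Sig rkS Del rkD M" and s: "wf_tr Sig rkS s" "vars s \<subseteq> la M" and m: "msem M s = Some u"
  have p: "dstate M s \<in> la M" using dstate_in[OF D s] .
  have ax: "wf_tr Del rkD (axm M (dstate M s))" "vars (axm M (dstate M s)) \<subseteq> st M"
    using D p unfolding is_dtla_def by auto
  have def: "\<forall>q\<in>vars (axm M (dstate M s)). qsem M q s \<noteq> None" and uu: "u = tsubst (axm M (dstate M s)) (\<lambda>q. the (qsem M q s))"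
    using m by (auto simp: msem_def osubst_eq split: if_splits)
  have "labs (the (qsem M q s)) \<subseteq> Del \<and> vars (the (qsem M q s)) \<subseteq> st M \<times> vars s" if qv: "q \<in> vars (axm M (dstate M s))" for q
  proof -
    have "q \<in> st M" using qv ax(2) by auto
    moreover obtain w where "qsem M q s = Some w" using def qv by (meson option.exhaust)
    ultimately show ?thesis using qsem_good[OF D s] by auto
  qed
  then show ?thesis using wf_labs[OF ax(1)] by (auto simp: uu labs_tsubst vars_tsubst)
qed



lemma pat_le_antisym: "pat_le a b \<Longrightarrow> pat_le b a \<Longrightarrow> a = b"
proof (induction rule: pat_le.induct)
  case (bot t) then show ?case by (cases rule: pat_le.cases) auto
next
  case (var z) then show ?case by simp
next
  case (sym ts us a)
  from sym.prems have "list_all2 pat_le us ts" by (cases rule: pat_le.cases) auto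
  with sym.IH have "ts = us"
    by (induction ts arbitrary: us) (auto simp: list_all2_Cons1 list_all2_Cons2)
  then show ?case by simp
qed

lemma pat_le_Phi: "pat_le (Phi t) (tmap id Some (tsubst t F))"
proof (induction t)
  case (Var x) then show ?case by (simp add: Phi_def pat_le.bot)
next
  case (Sym a ts)
  then show ?case by (auto simp: Phi_def list_all2_map1 list_all2_map2 intro!: pat_le.sym list.rel_refl_strong)
qed

lemma pat_le_Phi2:
  assumes "P \<noteq> {}"
  shows "(\<forall>x\<in>vars t. \<forall>t'. (\<forall>p\<in>P. pat_le t' (tmap id Some (F p x))) \<longrightarrow> t' = Var None)
    \<Longrightarrow> (\<forall>p\<in>P. pat_le t' (tmap id Some (tsubst t (F p)))) \<Longrightarrow> pat_le t' (Phi t)"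
proof (induction t arbitrary: t')
  case (Var x)
  then have "t' = Var None" by auto
  then show ?case by (simp add: pat_le.bot)
next
  case (Sym a us)
  obtain p0 where p0: "p0 \<in> P" using assms(1) by auto
  from Sym.prems(2) p0 have "pat_le t' (Sym a (map (\<lambda>u. tmap id Some (tsubst u (F p0))) us))" by (simp add: comp_def id_def)
  then show ?case
  proof (cases rule: pat_le.cases)
    case bot then show ?thesis by (simp add: pat_le.bot)
  next
    case (sym ts)
    have l: "length ts = length us" using sym(2) by (auto dest: list_all2_lengthD)
    have "list_all2 pat_le ts (map Phi us)"
    proof (rule list_all2_all_nthI)
      show "length ts = length (map Phi us)" using l by simp
    next
      fix n assume n: "n < length ts"
      have mem: "us ! n \<in> set us" using n l by auto
      have all: "\<forall>p\<in>P. pat_le (ts ! n) (tmap id Some (tsubst (us ! n) (F p)))"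
      proof
        fix p assume p: "p \<in> P"
        have "pat_le t' (Sym a (map (\<lambda>u. tmap id Some (tsubst u (F p))) us))" using Sym.prems(2) p by (simp add: comp_def id_def)
        then have "list_all2 pat_le ts (map (\<lambda>u. tmap id Some (tsubst u (F p))) us)"
          using sym(1) by (cases rule: pat_le.cases) auto
        then show "pat_le (ts ! n) (tmap id Some (tsubst (us ! n) (F p)))"
          using n l by (auto dest: list_all2_nthD)
      qed
      have k: "\<forall>x\<in>vars (us ! n). \<forall>t'. (\<forall>p\<in>P. pat_le t' (tmap id Some (F p x))) \<longrightarrow> t' = Var None"
        using Sym.prems(1) mem unfolding id_def by auto
      show "pat_le (ts ! n) (map Phi us ! n)"
        using Sym.IH[OF mem k all] n l by auto
    qed
    then have "pat_le (Sym a ts) (Sym a (map Phi us))" by (rule pat_le.sym)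
    then show ?thesis using sym(1) by (simp add: Phi_def[abs_def] comp_def)
  qed
qed

lemma Glb_eq:
  assumes "P \<noteq> {}"
    and key: "\<forall>x\<in>vars t. \<forall>t'. (\<forall>p\<in>P. pat_le t' (tmap id Some (F p x))) \<longrightarrow> t' = Var None"
  shows "Glb {tmap id Some (tsubst t (F p)) | p. p \<in> P} = Phi t"
proof -
  have g: "is_glb {tmap id Some (tsubst t (F p)) | p. p \<in> P} (Phi t)"
    unfolding is_glb_def
  proof (intro conjI ballI allI impI)
    fix u assume "u \<in> {tmap id Some (tsubst t (F p)) | p. p \<in> P}"
    then show "pat_le (Phi t) u" using pat_le_Phi by auto
  next
    fix t' assume "\<forall>u\<in>{tmap id Some (tsubst t (F p)) | p. p \<in> P}. pat_le t' u"
    then have "\<forall>p\<in>P. pat_le t' (tmap id Some (tsubst t (F p)))" by blast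
    then show "pat_le t' (Phi t)"
      by (rule pat_le_Phi2[OF assms(1) key])
  qed
  show ?thesis unfolding Glb_def
  proof (rule the_equality)
    show "is_glb {tmap id Some (tsubst t (F p)) | p. p \<in> P} (Phi t)" by (rule g)
  next
    fix b assume "is_glb {tmap id Some (tsubst t (F p)) | p. p \<in> P} b"
    with g show "b = Phi t" unfolding is_glb_def by (blast intro: pat_le_antisym)
  qed
qed



lemma wf_tmap: "wf_tr A rk (tmap id f s) = wf_tr A rk s"
  by (induction s) auto

theorem mainTheorem4:
  fixes Sig :: "'s set" and rkS :: "'s \<Rightarrow> nat" and Del :: "'d set" and rkD :: "'d \<Rightarrow> nat"
    and M :: "('s,'d,'q,'p) dtla" and N :: "('s,'d,'r,unit) dtla"
    and phi :: "'r \<Rightarrow> 'p \<Rightarrow> ('d,'q \<times> 'p) tr" and C :: "('s,unit) tr"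
  assumes "is_dtpla Sig rkS Del rkD M" and "canonical Sig rkS Del rkD M"
    and "is_dtop Sig rkS Del rkD N" and "earliest Sig rkS Del N" and "total Sig rkS N"
    and "\<forall>q\<in>st N. reachable Sig rkS N q"
    and "same_transl Sig rkS M N"
    and "aheadness Sig rkS M N phi"
    and "is_context Sig rkS C"
  shows "map_option Phi (ctx_out N C ()) = pref M C
    \<and> (\<forall>v q p t. q \<in> st N \<and> p \<in> la M \<and> ctx_out N C () = Some t \<and> subt t v = Some (Var (q, ()))
           \<longrightarrow> (\<exists>t'. ctx_out M C p = Some t' \<and> subt t' v = Some (phi q p)))"
proof -
  have DM: "is_dtla Sig rkS Del rkD M" and card: "card (la M) \<ge> 2" using assms(1) by (auto simp: is_dtpla_def)
  have TM: "total Sig rkS M" using assms(2) by (simp add: canonical_def)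
  have DN: "is_dtla Sig rkS Del rkD N" and laN: "la N = {()}" using assms(3) by (auto simp: is_dtop_def)
  have Cw: "wf_tr Sig rkS C" using assms(9) by (simp add: is_context_def)
  have ah: "\<And>p. p \<in> la M \<Longrightarrow> ctx_out M C p = map_option (\<lambda>t. tsubst t (\<lambda>(q, _). phi q p)) (ctx_out N C ())"
    using assms(8,9) by (simp add: aheadness_def)
  obtain p1 p2 where p12: "p1 \<in> la M" "p2 \<in> la M" "p1 \<noteq> p2"
  proof -
    have "Suc (Suc 0) \<le> card (la M)" using card by simp
    then obtain a B where aB: "la M = insert a B" "a \<notin> B" "Suc 0 \<le> card B" "finite B"
      by (auto simp: card_le_Suc_iff)
    then obtain b B' where "B = insert b B'" by (auto simp: card_le_Suc_iff)
    then show ?thesis using that[of a b] aB by auto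
  qed
  have laM: "la M \<noteq> {}" using p12 by auto
  define F where "F = (\<lambda>p (x :: 'r \<times> unit). case x of (q, _) \<Rightarrow> phi q p)"
  have part2: "\<forall>v q p t. q \<in> st N \<and> p \<in> la M \<and> ctx_out N C () = Some t \<and> subt t v = Some (Var (q, ()))
           \<longrightarrow> (\<exists>t'. ctx_out M C p = Some t' \<and> subt t' v = Some (phi q p))"
  proof (intro allI impI)
    fix v q p t assume h: "q \<in> st N \<and> p \<in> la M \<and> ctx_out N C () = Some t \<and> subt t v = Some (Var (q, ()))"
    then have "ctx_out M C p = Some (tsubst t (\<lambda>(q, _). phi q p))" using ah by simp
    moreover have "subt (tsubst t (\<lambda>(q, _). phi q p)) v = Some (phi q p)"
      using subt_tsubst[of t v "(q,())" "\<lambda>(q, _). phi q p"] h by simp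
    ultimately show "\<exists>t'. ctx_out M C p = Some t' \<and> subt t' v = Some (phi q p)" by blast
  qed
  have part1: "map_option Phi (ctx_out N C ()) = pref M C"
  proof (cases "ctx_out N C ()")
    case None
    then have "ctx_out M C p1 = None" using ah p12 by simp
    then have "\<not> (\<forall>p\<in>la M. ctx_out M C p \<noteq> None)" using p12 by blast
    then have "pref M C = None" unfolding pref_def by presburger
    then show ?thesis using None by simp
  next
    case (Some t)
    have cM: "\<And>p. p \<in> la M \<Longrightarrow> ctx_out M C p = Some (tsubst t (F p))"
      using ah Some by (simp add: F_def)
    have pr: "pref M C = Some (Glb {tmap id Some (tsubst t (F p)) | p. p \<in> la M})"
    proof -
      have "{tmap id Some (the (ctx_out M C p)) | p. p \<in> la M} = {tmap id Some (tsubst t (F p)) | p. p \<in> la M}"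
        using cM by force
      then show ?thesis using cM by (simp add: pref_def)
    qed
    have CNw: "wf_tr Sig rkS (tsubst C (\<lambda>_. Var ()))" by (rule wf_tsubst[OF Cw]) simp
    have vt: "vars t \<subseteq> st N \<times> UNIV"
    proof -
      have "\<forall>x::unit. x \<in> la N" using laN by simp
      then have "vars (tsubst C (\<lambda>_. Var ())) \<subseteq> la N" by blast
      moreover have "msem N (tsubst C (\<lambda>_. Var ())) = Some t" using Some by (simp add: ctx_out_def)
      ultimately have "labs t \<subseteq> Del \<and> vars t \<subseteq> st N \<times> vars (tsubst C (\<lambda>_. Var ()))"
        by (rule msem_good[OF DN CNw])
      then show ?thesis by blast
    qed
    have gM: "labs (tsubst t (F p)) \<subseteq> Del \<and> vars (tsubst t (F p)) \<subseteq> st M \<times> {p}" if p: "p \<in> la M" for p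
    proof -
      have w: "wf_tr Sig rkS (tsubst C (\<lambda>_. Var p))" by (rule wf_tsubst[OF Cw]) simp
      have "vars (tsubst C (\<lambda>_. Var p)) \<subseteq> {p}" by (auto simp: vars_tsubst)
      moreover have "msem M (tsubst C (\<lambda>_. Var p)) = Some (tsubst t (F p))" using cM[OF p] by (simp add: ctx_out_def)
      moreover have "vars (tsubst C (\<lambda>_. Var p)) \<subseteq> la M" using p by (auto simp: vars_tsubst)
      ultimately show ?thesis using msem_good[OF DM w] by blast
    qed
    have key: "\<forall>x\<in>vars t. \<forall>t'. (\<forall>p\<in>la M. pat_le t' (tmap id Some (F p x))) \<longrightarrow> t' = Var None"
    proof (intro ballI allI impI)
      fix x t' assume xt: "x \<in> vars t" and le: "\<forall>p\<in>la M. pat_le t' (tmap id Some (F p x))"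
      obtain q where xq: "x = (q, ())" by (cases x) auto
      have qN: "q \<in> st N" using vt xt xq by auto
      have Fx: "F p x = phi q p" for p by (simp add: F_def xq)
      have vphi: "vars (phi q p) \<subseteq> st M \<times> {p}" and lphi: "labs (phi q p) \<subseteq> Del" if "p \<in> la M" for p
        using gM[OF that] xt by (auto simp: vars_tsubst labs_tsubst Fx[symmetric])
      show "t' = Var None"
      proof (cases t')
        case (Var z)
        show ?thesis
        proof (cases z)
          case (Some zz)
          have "phi q p = Var zz" if p: "p \<in> la M" for p
          proof -
            have "pat_le (Var (Some zz)) (tmap id Some (phi q p))" using le p Var Some Fx by simp
            then have "tmap id Some (phi q p) = Var (Some zz)" by (cases rule: pat_le.cases) auto
            then show ?thesis by (cases "phi q p") auto
          qed
          then have "zz \<in> vars (phi q p1)" "zz \<in> vars (phi q p2)" using p12 by simp_all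
          then have "zz \<in> st M \<times> {p1}" "zz \<in> st M \<times> {p2}" using vphi[OF p12(1)] vphi[OF p12(2)] by blast+
          then show ?thesis using p12 by auto
        qed (simp add: Var)
      next
        case (Sym d ts)
        have rt: "\<exists>us. phi q p = Sym d us" if p: "p \<in> la M" for p
        proof -
          have "pat_le (Sym d ts) (tmap id Some (phi q p))" using le p Sym Fx by simp
          then obtain us where "tmap id Some (phi q p) = Sym d us" by (cases rule: pat_le.cases) auto
          then show ?thesis by (cases "phi q p") auto
        qed
        have dD: "d \<in> Del" using rt[OF p12(1)] lphi[OF p12(1)] by auto
        have "\<forall>s\<in>qdom Sig rkS N q. \<exists>ts. qsem N q s = Some (Sym d ts)"
        proof
          fix s assume "s \<in> qdom Sig rkS N q"
          then have sg: "ground Sig rkS s" by (simp add: qdom_def)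
          define sM :: "('s,'p) tr" where "sM = tmap id (\<lambda>_. undefined) s"
          have sMg: "ground Sig rkS sM" using sg unfolding sM_def ground_def
            by (simp add: wf_tmap tr.set_map)
          have er: "erase sM = erase s" unfolding sM_def erase_def by (simp add: tr.map_comp comp_def id_def)
          define p where "p = dstate M sM"
          have p: "p \<in> la M" unfolding p_def using dstate_in[OF DM] sMg by (auto simp: ground_def)
          let ?CM = "tsubst C (\<lambda>_. sM)" and ?CN = "tsubst C (\<lambda>_. s)"
          have gCM: "ground Sig rkS ?CM" using sMg Cw by (auto simp: ground_def vars_tsubst intro: wf_tsubst)
          have gCN: "ground Sig rkS ?CN" using sg Cw by (auto simp: ground_def vars_tsubst intro: wf_tsubst)
          have eC: "erase ?CM = erase ?CN" using er unfolding erase_def by (simp add: erase_tsubst)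
          have st: "map_option erase (msem M ?CM) = map_option erase (msem N ?CN)"
            using assms(7) gCM gCN eC unfolding same_transl_def by blast
          define GM where "GM = (\<lambda>(q' :: 'q, _ :: 'p). qsem M q' sM)"
          define GN where "GN = (\<lambda>(q' :: 'r, _ :: unit). qsem N q' s)"
          have mM: "msem M ?CM = osubst t (\<lambda>x. osubst (F p x) GM)"
          proof -
            have "msem M ?CM = Option.bind (ctx_out M C p) (\<lambda>u. osubst u GM)"
              unfolding ctx_out_def p_def GM_def by (rule msem_comp)
            then show ?thesis using cM[OF p] by (simp add: osubst_tsubst)
          qed
          have mN: "msem N ?CN = osubst t GN"
          proof -
            have "msem N ?CN = Option.bind (ctx_out N C (dstate N s)) (\<lambda>u. osubst u GN)"
              unfolding ctx_out_def GN_def by (rule msem_comp)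
            then show ?thesis using Some by simp
          qed
          obtain aM where aM: "msem M ?CM = Some aM" using TM gCM by (auto simp: total_def)
          obtain aN where aN: "msem N ?CN = Some aN" using assms(5) gCN by (auto simp: total_def)
          have dM: "\<forall>x\<in>vars t. osubst (F p x) GM \<noteq> None" and aMe: "aM = tsubst t (\<lambda>x. the (osubst (F p x) GM))"
            using aM mM by (auto simp: osubst_eq[of t] split: if_splits)
          have dN: "\<forall>x\<in>vars t. GN x \<noteq> None" and aNe: "aN = tsubst t (\<lambda>x. the (GN x))"
            using aN mN by (auto simp: osubst_eq[of t] split: if_splits)
          have "erase aM = erase aN" using st aM aN by simp
          then have ex: "erase (the (osubst (F p x) GM)) = erase (the (GN x))"
            unfolding aMe aNe erase_def by (rule tmap_tsubst_leaf[OF _ xt])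
          obtain us where us: "phi q p = Sym d us" using rt[OF p] by blast
          obtain w where w: "osubst (F p x) GM = Some w" using dM xt by blast
          have "\<exists>ws. w = Sym d ws" using w us Fx by (auto simp: osubst_eq split: if_splits)
          then obtain ws where ws: "the (osubst (F p x) GM) = Sym d ws" using w by auto
          obtain g where g: "GN x = Some g" using dN xt by blast
          have "tmap id (\<lambda>_. ()) g = Sym d (map (tmap id (\<lambda>_. ())) ws)" using ex ws g by (simp add: erase_def comp_def)
          then obtain gs where "g = Sym d gs" by (cases g) auto
          then show "\<exists>ts. qsem N q s = Some (Sym d ts)" using g xq by (simp add: GN_def)
        qed
        then have False using assms(4) qN dD unfolding earliest_def by blast
        then show ?thesis ..
      qed
    qed
    have "Glb {tmap id Some (tsubst t (F p)) | p. p \<in> la M} = Phi t"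
      by (rule Glb_eq[OF laM key])
    then show ?thesis using pr Some by simp
  qed
  show ?thesis using part1 part2 by blast
qed


end
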